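(* Let $A$ be a commutative noetherian local ring and let $x,y\in A$ be a regular exact pair of zero divisors. Let $a\in A$ be weakly regular on the $A$-module $A/(x,y)$, and let $b\in A$ be any element. Then there are $A$-module isomorphisms (a) $\operatorname{Hom}_A(H_a,H_{ab})\cong\operatorname{Hom}_A(G_{ab},G_a)\cong H_b$, and (b) $\operatorname{Hom}_A(G_a,G_{ab})\cong\operatorname{Hom}_A(H_{ab},H_a)\cong G_b$.
   Context: Two non-units $x,y\in A$ form an exact pair of zero divisors if $\operatorname{Ann}_A(x)=(y)$ and $\operatorname{Ann}_A(y)=(x)$; such a pair is regular if $(x)\cap(y)=0$. An element $a\in A$ is weakly regular on a module $M$ if multiplication by $a$ on $M$ is injective. For $a\in A$, let $\gamma_a=\begin{pmatrix} x & a\\ 0 & y\end{pmatrix}$ and $\eta_a=\begin{pmatrix} y & -a\\ 0 & x\end{pmatrix}$, viewed as $A$-linear maps $A^2\to A^2$ acting on column vectors, and set $G_a=\operatorname{Coker}\gamma_a$, $H_a=\operatorname{Coker}\eta_a$. *)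

theory Defs
  imports Main
begin

definition is_ideal :: "'a::comm_ring_1 set \<Rightarrow> bool" where
  "is_ideal I \<longleftrightarrow> 0 \<in> I \<and> (\<forall>u\<in>I. \<forall>v\<in>I. u + v \<in> I) \<and> (\<forall>r. \<forall>u\<in>I. r * u \<in> I)"

definition ideal_span :: "'a::comm_ring_1 set \<Rightarrow> 'a set" where
  "ideal_span F = {\<Sum>f\<in>F. c f * f | c. True}"

definition noetherian_ring :: "'a::comm_ring_1 itself \<Rightarrow> bool" where
  "noetherian_ring _ \<longleftrightarrow>
     (\<forall>I::'a set. is_ideal I \<longrightarrow> (\<exists>F. finite F \<and> F \<subseteq> I \<and> I = ideal_span F))"

definition maximal_ideal :: "'a::comm_ring_1 set \<Rightarrow> bool" where
  "maximal_ideal m \<longleftrightarrow> is_ideal m \<and> m \<noteq> UNIV \<and>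
     (\<forall>J. is_ideal J \<and> m \<subseteq> J \<and> J \<noteq> UNIV \<longrightarrow> J = m)"

definition local_ring :: "'a::comm_ring_1 itself \<Rightarrow> bool" where
  "local_ring _ \<longleftrightarrow> (\<exists>!m::'a set. maximal_ideal m)"

definition is_unit :: "'a::comm_ring_1 \<Rightarrow> bool" where
  "is_unit u \<longleftrightarrow> u dvd 1"

definition principal :: "'a::comm_ring_1 \<Rightarrow> 'a set" where
  "principal x = {r * x | r. True}"

definition Ann :: "'a::comm_ring_1 \<Rightarrow> 'a set" where
  "Ann x = {r. r * x = 0}"

definition exact_pair :: "'a::comm_ring_1 \<Rightarrow> 'a \<Rightarrow> bool" where
  "exact_pair x y \<longleftrightarrow> \<not> is_unit x \<and> \<not> is_unit y \<and> Ann x = principal y \<and> Ann y = principal x"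

definition regular_exact_pair :: "'a::comm_ring_1 \<Rightarrow> 'a \<Rightarrow> bool" where
  "regular_exact_pair x y \<longleftrightarrow> exact_pair x y \<and> principal x \<inter> principal y = {0}"

record ('a, 'm) amod =
  mcarrier :: "'m set"
  madd :: "'m \<Rightarrow> 'm \<Rightarrow> 'm"
  mzero :: "'m"
  msmul :: "'a \<Rightarrow> 'm \<Rightarrow> 'm"

definition mod_iso :: "('a, 'm) amod \<Rightarrow> ('a, 'n) amod \<Rightarrow> bool" where
  "mod_iso M N \<longleftrightarrow> (\<exists>f. bij_betw f (mcarrier M) (mcarrier N) \<and>
     (\<forall>u\<in>mcarrier M. \<forall>v\<in>mcarrier M. f (madd M u v) = madd N (f u) (f v)) \<and>
     (\<forall>r. \<forall>u\<in>mcarrier M. f (msmul M r u) = msmul N r (f u)))"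

definition mod_linear :: "('a, 'm) amod \<Rightarrow> ('a, 'n) amod \<Rightarrow> ('m \<Rightarrow> 'n) \<Rightarrow> bool" where
  "mod_linear M N f \<longleftrightarrow> (\<forall>u\<in>mcarrier M. f u \<in> mcarrier N) \<and>
     (\<forall>u\<in>mcarrier M. \<forall>v\<in>mcarrier M. f (madd M u v) = madd N (f u) (f v)) \<and>
     (\<forall>r. \<forall>u\<in>mcarrier M. f (msmul M r u) = msmul N r (f u))"

definition Hom_mod :: "('a::comm_ring_1, 'm) amod \<Rightarrow> ('a, 'n) amod \<Rightarrow> ('a, 'm \<Rightarrow> 'n) amod" where
  "Hom_mod M N = \<lparr> mcarrier = {f. mod_linear M N f \<and> (\<forall>u. u \<notin> mcarrier M \<longrightarrow> f u = undefined)},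
     madd = (\<lambda>f g u. if u \<in> mcarrier M then madd N (f u) (g u) else undefined),
     mzero = (\<lambda>u. if u \<in> mcarrier M then mzero N else undefined),
     msmul = (\<lambda>r f u. if u \<in> mcarrier M then msmul N r (f u) else undefined) \<rparr>"

definition quot_mod :: "('a, 'm) amod \<Rightarrow> 'm set \<Rightarrow> ('a, 'm set) amod" where
  "quot_mod M S = \<lparr> mcarrier = {{madd M v s | s. s \<in> S} | v. v \<in> mcarrier M},
     madd = (\<lambda>C D. {madd M c d | c d. c \<in> C \<and> d \<in> D}),
     mzero = S,
     msmul = (\<lambda>r C. {madd M (msmul M r c) s | c s. c \<in> C \<and> s \<in> S}) \<rparr>"

definition ring_mod :: "('a::comm_ring_1, 'a) amod" where
  "ring_mod = \<lparr> mcarrier = UNIV, madd = (+), mzero = 0, msmul = (*) \<rparr>"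

definition free2 :: "('a::comm_ring_1, 'a \<times> 'a) amod" where
  "free2 = \<lparr> mcarrier = UNIV, madd = (\<lambda>(u1, u2) (v1, v2). (u1 + v1, u2 + v2)), mzero = (0, 0),
     msmul = (\<lambda>r (u1, u2). (r * u1, r * u2)) \<rparr>"

definition weakly_regular :: "'a \<Rightarrow> ('a, 'm) amod \<Rightarrow> bool" where
  "weakly_regular a M \<longleftrightarrow> inj_on (msmul M a) (mcarrier M)"

definition quot_xy :: "'a::comm_ring_1 \<Rightarrow> 'a \<Rightarrow> ('a, 'a set) amod" where
  "quot_xy x y = quot_mod ring_mod (ideal_span {x, y})"

text \<open>gamma_a = [[x, a],[0, y]], eta_a = [[y, -a],[0, x]] acting on column vectors.\<close>
definition gamma_map :: "'a::comm_ring_1 \<Rightarrow> 'a \<Rightarrow> 'a \<Rightarrow> 'a \<times> 'a \<Rightarrow> 'a \<times> 'a" where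
  "gamma_map x y a = (\<lambda>(s, t). (x * s + a * t, 0 * s + y * t))"

definition eta_map :: "'a::comm_ring_1 \<Rightarrow> 'a \<Rightarrow> 'a \<Rightarrow> 'a \<times> 'a \<Rightarrow> 'a \<times> 'a" where
  "eta_map x y a = (\<lambda>(s, t). (y * s + (- a) * t, 0 * s + x * t))"

definition G_mod :: "'a::comm_ring_1 \<Rightarrow> 'a \<Rightarrow> 'a \<Rightarrow> ('a, ('a \<times> 'a) set) amod" where
  "G_mod x y a = quot_mod free2 (range (gamma_map x y a))"

definition H_mod :: "'a::comm_ring_1 \<Rightarrow> 'a \<Rightarrow> 'a \<Rightarrow> ('a, ('a \<times> 'a) set) amod" where
  "H_mod x y a = quot_mod free2 (range (eta_map x y a))"

end

theory Submission
  imports Defs "HOL-Library.Product_Plus"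
begin


definition sm :: "'a::comm_ring_1 \<Rightarrow> 'a \<times> 'a \<Rightarrow> 'a \<times> 'a" where
  "sm r p = (r * fst p, r * snd p)"

lemma sm_simps[simp]: "sm r (u, v) = (r * u, r * v)" "fst (sm r p) = r * fst p" "snd (sm r p) = r * snd p"
  by (simp_all add: sm_def)

lemma free2_simps[simp]: "mcarrier free2 = UNIV" "madd free2 p q = p + q" "msmul free2 r p = sm r p"
  "mzero free2 = 0"
  by (auto simp: free2_def zero_prod_def split: prod.splits)

lemma free2_madd: "madd free2 = (+)" by (simp add: fun_eq_iff)
lemma free2_msmul: "msmul free2 = sm" by (simp add: fun_eq_iff)

definition submod :: "('a::comm_ring_1 \<times> 'a) set \<Rightarrow> bool" where
  "submod S \<longleftrightarrow> 0 \<in> S \<and> (\<forall>p\<in>S. \<forall>q\<in>S. p + q \<in> S) \<and> (\<forall>r. \<forall>p\<in>S. sm r p \<in> S)"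

lemma submod_neg: "submod S \<Longrightarrow> p \<in> S \<Longrightarrow> - p \<in> S"
proof -
  assume "submod S" "p \<in> S"
  then have "sm (-1) p \<in> S" by (auto simp: submod_def)
  moreover have "sm (-1) p = - p" by (simp add: sm_def prod_eq_iff)
  ultimately show ?thesis by simp
qed

lemma submod_add: "submod S \<Longrightarrow> p \<in> S \<Longrightarrow> q \<in> S \<Longrightarrow> p + q \<in> S"
  by (auto simp: submod_def)

lemma submod_diff: "submod S \<Longrightarrow> p \<in> S \<Longrightarrow> q \<in> S \<Longrightarrow> p - q \<in> S"
  using submod_add[of S p "-q"] submod_neg[of S q] by simp

lemma submod_zero: "submod S \<Longrightarrow> 0 \<in> S" by (auto simp: submod_def)
lemma submod_sm: "submod S \<Longrightarrow> p \<in> S \<Longrightarrow> sm r p \<in> S" by (auto simp: submod_def)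

definition cos :: "('a::comm_ring_1 \<times> 'a) set \<Rightarrow> 'a \<times> 'a \<Rightarrow> ('a \<times> 'a) set" where
  "cos S v = {v + s |s. s \<in> S}"

lemma mem_cos: "w \<in> cos S v \<longleftrightarrow> w - v \<in> S"
proof
  assume "w \<in> cos S v" then obtain s where "w = v + s" "s \<in> S" unfolding cos_def by blast
  then show "w - v \<in> S" by simp
next
  assume "w - v \<in> S" then have "w = v + (w - v) \<and> w - v \<in> S" by simp
  then show "w \<in> cos S v" unfolding cos_def by blast
qed

lemma self_cos: "submod S \<Longrightarrow> v \<in> cos S v"
  by (simp add: mem_cos submod_zero)

lemma cos_eq_iff: assumes "submod S" shows "cos S v = cos S w \<longleftrightarrow> v - w \<in> S"
proof
  assume "cos S v = cos S w"
  then have "v \<in> cos S w" using self_cos[OF assms] by metis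
  then show "v - w \<in> S" by (simp add: mem_cos)
next
  assume h: "v - w \<in> S"
  show "cos S v = cos S w"
  proof (auto simp: mem_cos)
    fix z assume "z - v \<in> S"
    then have "(z - v) + (v - w) \<in> S" using h assms submod_add by blast
    then show "z - w \<in> S" by (simp add: algebra_simps)
  next
    fix z assume "z - w \<in> S"
    then have "(z - w) - (v - w) \<in> S" using h assms submod_diff by blast
    then show "z - v \<in> S" by (simp add: algebra_simps)
  qed
qed

lemma cos_mem_eq: "submod S \<Longrightarrow> e \<in> cos S v \<Longrightarrow> cos S e = cos S v"
  by (simp add: cos_eq_iff mem_cos)

abbreviation Qm :: "('a::comm_ring_1 \<times> 'a) set \<Rightarrow> ('a, ('a \<times> 'a) set) amod" where
  "Qm S \<equiv> quot_mod free2 S"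

lemma carrier_Q: "mcarrier (Qm S) = range (cos S)"
  by (simp add: quot_mod_def cos_def free2_madd image_def)

lemma add_Q: assumes "submod S" shows "madd (Qm S) (cos S v) (cos S w) = cos S (v + w)"
proof -
  have "madd (Qm S) (cos S v) (cos S w) = {c + d |c d. c \<in> cos S v \<and> d \<in> cos S w}"
    by (simp add: quot_mod_def free2_madd)
  also have "\<dots> = cos S (v + w)"
  proof (rule set_eqI, rule iffI)
    fix z assume "z \<in> {c + d |c d. c \<in> cos S v \<and> d \<in> cos S w}"
    then obtain c d where cd: "z = c + d" "c - v \<in> S" "d - w \<in> S" by (auto simp: mem_cos)
    then have "(c - v) + (d - w) \<in> S" using assms submod_add by blast
    then show "z \<in> cos S (v + w)" using cd by (simp add: mem_cos algebra_simps)
  next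
    fix z assume "z \<in> cos S (v + w)"
    then have "z - w - v \<in> S" "w - w \<in> S" by (simp_all add: mem_cos submod_zero[OF assms] algebra_simps)
    then have "z = (z - w) + w \<and> z - w \<in> cos S v \<and> w \<in> cos S w" by (simp add: mem_cos)
    then show "z \<in> {c + d |c d. c \<in> cos S v \<and> d \<in> cos S w}" by blast
  qed
  finally show ?thesis .
qed

lemma sm_add: "sm r (p + q) = sm r p + sm r q"
  by (simp add: prod_eq_iff algebra_simps)
lemma sm_diff: "sm r (p - q) = sm r p - sm r q"
  by (simp add: prod_eq_iff algebra_simps)

lemma smul_Q: assumes "submod S" shows "msmul (Qm S) r (cos S v) = cos S (sm r v)"
proof -
  have "msmul (Qm S) r (cos S v) = {madd free2 (sm r c) s |c s. c \<in> cos S v \<and> s \<in> S}"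
    by (simp add: quot_mod_def free2_msmul)
  also have "\<dots> = cos S (sm r v)"
  proof (rule set_eqI, rule iffI)
    fix z assume "z \<in> {madd free2 (sm r c) s |c s. c \<in> cos S v \<and> s \<in> S}"
    then obtain c s where cd: "z = sm r c + s" "c - v \<in> S" "s \<in> S" by (auto simp: mem_cos)
    then have "sm r (c - v) + s \<in> S" using assms submod_add submod_sm by blast
    then show "z \<in> cos S (sm r v)" using cd by (simp add: mem_cos sm_diff algebra_simps)
  next
    fix z assume "z \<in> cos S (sm r v)"
    then have "z - sm r v \<in> S" "v \<in> cos S v" by (simp_all add: mem_cos submod_zero[OF assms])
    then have "z = madd free2 (sm r v) (z - sm r v) \<and> v \<in> cos S v \<and> z - sm r v \<in> S" by simp
    then show "z \<in> {madd free2 (sm r c) s |c s. c \<in> cos S v \<and> s \<in> S}" by blast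
  qed
  finally show ?thesis .
qed


definition lin :: "'a::comm_ring_1 \<times> 'a \<Rightarrow> 'a \<times> 'a \<Rightarrow> 'a \<times> 'a \<Rightarrow> 'a \<times> 'a" where
  "lin P R d = sm (fst d) P + sm (snd d) R"

lemma lin_add: "lin P R (v + w) = lin P R v + lin P R w"
  by (simp add: lin_def prod_eq_iff algebra_simps)
lemma lin_diff: "lin P R (v - w) = lin P R v - lin P R w"
  by (simp add: lin_def prod_eq_iff algebra_simps)
lemma lin_zero: "lin P R 0 = 0"
  by (simp add: lin_def prod_eq_iff)
lemma lin_e1: "lin P R (1, 0) = P" by (simp add: lin_def prod_eq_iff)
lemma lin_e2: "lin P R (0, 1) = R" by (simp add: lin_def prod_eq_iff)

definition ind :: "('a::comm_ring_1 \<times> 'a) set \<Rightarrow> ('a \<times> 'a) set \<Rightarrow> ('a \<times> 'a \<Rightarrow> 'a \<times> 'a)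
   \<Rightarrow> ('a \<times> 'a) set \<Rightarrow> ('a \<times> 'a) set" where
  "ind S1 S2 L = (\<lambda>D. if D \<in> mcarrier (Qm S1) then cos S2 (L (SOME d. d \<in> D)) else undefined)"

lemma some_cos: assumes "submod S" shows "cos S (SOME d. d \<in> cos S v) = cos S v"
  "(SOME d. d \<in> cos S v) - v \<in> S"
proof -
  have "(SOME d. d \<in> cos S v) \<in> cos S v" using self_cos[OF assms] by (rule someI)
  then show "cos S (SOME d. d \<in> cos S v) = cos S v" "(SOME d. d \<in> cos S v) - v \<in> S"
    using assms cos_mem_eq mem_cos by blast+
qed

lemma ind_apply:
  assumes S1: "submod S1" and S2: "submod S2" and c: "\<forall>s\<in>S1. lin P R s \<in> S2"
  shows "ind S1 S2 (lin P R) (cos S1 d) = cos S2 (lin P R d)"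
proof -
  let ?e = "SOME e. e \<in> cos S1 d"
  have "?e - d \<in> S1" using some_cos[OF S1] by blast
  then have "lin P R ?e - lin P R d \<in> S2" using c by (metis lin_diff)
  then show ?thesis by (simp add: ind_def carrier_Q cos_eq_iff[OF S2])
qed

lemma Hom_add:
  assumes S2: "submod S2"
  shows "madd (Hom_mod (Qm S1) (Qm S2)) (ind S1 S2 (lin P R)) (ind S1 S2 (lin P' R'))
     = ind S1 S2 (lin (P + P') (R + R'))"
proof (rule ext)
  fix D
  have "lin (P + P') (R + R') d = lin P R d + lin P' R' d" for d
    by (simp add: lin_def prod_eq_iff algebra_simps)
  then show "madd (Hom_mod (Qm S1) (Qm S2)) (ind S1 S2 (lin P R)) (ind S1 S2 (lin P' R')) D
     = ind S1 S2 (lin (P + P') (R + R')) D"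
    by (simp add: Hom_mod_def ind_def add_Q[OF S2])
qed

lemma Hom_smul:
  assumes S2: "submod S2"
  shows "msmul (Hom_mod (Qm S1) (Qm S2)) r (ind S1 S2 (lin P R))
     = ind S1 S2 (lin (sm r P) (sm r R))"
proof (rule ext)
  fix D
  have "lin (sm r P) (sm r R) d = sm r (lin P R d)" for d
    by (simp add: lin_def prod_eq_iff algebra_simps)
  then show "msmul (Hom_mod (Qm S1) (Qm S2)) r (ind S1 S2 (lin P R)) D
     = ind S1 S2 (lin (sm r P) (sm r R)) D"
    by (simp add: Hom_mod_def ind_def smul_Q[OF S2])
qed

lemma ind_in_Hom:
  assumes S1: "submod S1" and S2: "submod S2" and c: "\<forall>s\<in>S1. lin P R s \<in> S2"
  shows "ind S1 S2 (lin P R) \<in> mcarrier (Hom_mod (Qm S1) (Qm S2))"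
proof -
  note ia = ind_apply[OF S1 S2 c]
  have "mod_linear (Qm S1) (Qm S2) (ind S1 S2 (lin P R))"
    unfolding mod_linear_def
  proof (intro conjI ballI allI)
    fix u assume "u \<in> mcarrier (Qm S1)"
    then show "ind S1 S2 (lin P R) u \<in> mcarrier (Qm S2)" by (auto simp: carrier_Q ia)
  next
    fix u v assume "u \<in> mcarrier (Qm S1)" "v \<in> mcarrier (Qm S1)"
    then show "ind S1 S2 (lin P R) (madd (Qm S1) u v) =
       madd (Qm S2) (ind S1 S2 (lin P R) u) (ind S1 S2 (lin P R) v)"
    proof -
      obtain v1 where "u = cos S1 v1" using \<open>u \<in> mcarrier (Qm S1)\<close> by (auto simp: carrier_Q)
      moreover obtain v2 where "v = cos S1 v2" using \<open>v \<in> mcarrier (Qm S1)\<close> by (auto simp: carrier_Q)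
      ultimately show ?thesis by (simp add: ia add_Q[OF S1] add_Q[OF S2] lin_add)
    qed
  next
    fix r u assume "u \<in> mcarrier (Qm S1)"
    moreover have "lin P R (sm r d) = sm r (lin P R d)" for d
      by (simp add: lin_def prod_eq_iff algebra_simps)
    ultimately show "ind S1 S2 (lin P R) (msmul (Qm S1) r u) = msmul (Qm S2) r (ind S1 S2 (lin P R) u)"
      by (auto simp: carrier_Q ia smul_Q[OF S1] smul_Q[OF S2] simp del: sm_simps)
  qed
  then show ?thesis by (simp add: Hom_mod_def ind_def)
qed

lemma Hom_char:
  assumes S1: "submod S1" and S2: "submod S2" and phi: "\<phi> \<in> mcarrier (Hom_mod (Qm S1) (Qm S2))"
  shows "\<exists>P R. \<phi> = ind S1 S2 (lin P R) \<and> (\<forall>s\<in>S1. lin P R s \<in> S2)"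
proof -
  have lin: "mod_linear (Qm S1) (Qm S2) \<phi>" and ext: "\<And>u. u \<notin> mcarrier (Qm S1) \<Longrightarrow> \<phi> u = undefined"
    using phi by (auto simp: Hom_mod_def)
  have cin: "cos S1 v \<in> mcarrier (Qm S1)" for v by (simp add: carrier_Q)
  obtain P where P: "\<phi> (cos S1 (1,0)) = cos S2 P"
    using lin cin unfolding mod_linear_def carrier_Q by blast
  obtain R where R: "\<phi> (cos S1 (0,1)) = cos S2 R"
    using lin cin unfolding mod_linear_def carrier_Q by blast
  have key: "\<phi> (cos S1 d) = cos S2 (lin P R d)" for d
  proof -
    obtain d1 d2 where d: "d = (d1, d2)" by (cases d)
    have "d = sm d1 (1,0) + sm d2 (0,1)" by (simp add: d)
    then have e: "cos S1 d = madd (Qm S1) (msmul (Qm S1) d1 (cos S1 (1,0))) (msmul (Qm S1) d2 (cos S1 (0,1)))"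
      by (simp only: smul_Q[OF S1] add_Q[OF S1])
    have m1: "msmul (Qm S1) d1 (cos S1 (1,0)) \<in> mcarrier (Qm S1)" "msmul (Qm S1) d2 (cos S1 (0,1)) \<in> mcarrier (Qm S1)"
      by (simp_all only: smul_Q[OF S1] cin)
    have "\<phi> (cos S1 d) = madd (Qm S2) (msmul (Qm S2) d1 (\<phi> (cos S1 (1,0)))) (msmul (Qm S2) d2 (\<phi> (cos S1 (0,1))))"
      using lin cin m1 unfolding mod_linear_def e by simp
    also have "\<dots> = cos S2 (lin P R d)"
      by (simp add: P R smul_Q[OF S2] add_Q[OF S2] lin_def d)
    finally show ?thesis .
  qed
  have "\<phi> = ind S1 S2 (lin P R)"
  proof
    fix D show "\<phi> D = ind S1 S2 (lin P R) D"
    proof (cases "D \<in> mcarrier (Qm S1)")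
      case True
      then obtain v where v: "D = cos S1 v" by (auto simp: carrier_Q)
      then show ?thesis using key[of "SOME d. d \<in> D"] some_cos[OF S1, of v]
        by (simp add: ind_def carrier_Q)
    next
      case False then show ?thesis by (simp add: ext ind_def)
    qed
  qed
  moreover have "\<forall>s\<in>S1. lin P R s \<in> S2"
  proof
    fix s assume "s \<in> S1"
    then have "cos S1 s = cos S1 0" by (simp add: cos_eq_iff[OF S1])
    then have "cos S2 (lin P R s) = cos S2 (lin P R 0)" by (metis key)
    then show "lin P R s \<in> S2" by (simp add: cos_eq_iff[OF S2] lin_zero)
  qed
  ultimately show ?thesis by blast
qed

lemma ind_eq_if:
  assumes S2: "submod S2" and "P - P' \<in> S2" and "R - R' \<in> S2"
  shows "ind S1 S2 (lin P R) = ind S1 S2 (lin P' R')"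
proof -
  have "lin P R d - lin P' R' d \<in> S2" for d
  proof -
    have "lin P R d - lin P' R' d = sm (fst d) (P - P') + sm (snd d) (R - R')"
      by (simp add: lin_def prod_eq_iff algebra_simps)
    then show ?thesis using assms by (metis submod_add submod_sm)
  qed
  then show ?thesis by (simp add: ind_def fun_eq_iff cos_eq_iff[OF S2])
qed

lemma ind_eq_imp:
  assumes S1: "submod S1" and S2: "submod S2" and c: "\<forall>s\<in>S1. lin P R s \<in> S2"
    and c': "\<forall>s\<in>S1. lin P' R' s \<in> S2"
    and e: "ind S1 S2 (lin P R) = ind S1 S2 (lin P' R')"
  shows "P - P' \<in> S2 \<and> R - R' \<in> S2"
proof -
  have "cos S2 P = cos S2 P'"
    using e ind_apply[OF S1 S2 c, of "(1,0)"] ind_apply[OF S1 S2 c', of "(1,0)"] by (simp add: lin_e1)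
  moreover have "cos S2 R = cos S2 R'"
    using e ind_apply[OF S1 S2 c, of "(0,1)"] ind_apply[OF S1 S2 c', of "(0,1)"] by (simp add: lin_e2)
  ultimately show ?thesis by (simp add: cos_eq_iff[OF S2])
qed

lemma first_iso:
  assumes S: "submod S"
    and add: "\<And>w w'. g (w + w') = madd N (g w) (g w')"
    and smul: "\<And>r w. g (sm r w) = msmul N r (g w)"
    and car: "mcarrier N = range g"
    and ker: "\<And>w w'. g w = g w' \<longleftrightarrow> w - w' \<in> S"
  shows "mod_iso (Qm S) N \<and> mod_iso N (Qm S)"
proof
  define F where "F C = g (SOME w. w \<in> C)" for C
  have Fc: "F (cos S v) = g v" for v
    using some_cos(2)[OF S, of v] ker unfolding F_def by blast
  show "mod_iso (Qm S) N" unfolding mod_iso_def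
  proof (intro exI conjI ballI allI)
    show "bij_betw F (mcarrier (Qm S)) (mcarrier N)"
      unfolding bij_betw_def inj_on_def carrier_Q car
      by (auto simp: Fc ker cos_eq_iff[OF S] image_image)
    show "F (madd (Qm S) u v) = madd N (F u) (F v)" if "u \<in> mcarrier (Qm S)" "v \<in> mcarrier (Qm S)" for u v
    proof -
      obtain v1 where "u = cos S v1" using \<open>u \<in> mcarrier (Qm S)\<close> by (auto simp: carrier_Q)
      moreover obtain v2 where "v = cos S v2" using \<open>v \<in> mcarrier (Qm S)\<close> by (auto simp: carrier_Q)
      ultimately show ?thesis by (simp add: add_Q[OF S] Fc add)
    qed
    show "F (msmul (Qm S) r u) = msmul N r (F u)" if "u \<in> mcarrier (Qm S)" for r u
      using that by (auto simp: carrier_Q smul_Q[OF S] Fc smul simp del: sm_simps)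
  qed
next
  define F where "F n = cos S (SOME w. g w = n)" for n
  have Fc: "F (g v) = cos S v" for v
  proof -
    have "g (SOME w. g w = g v) = g v" by (rule someI) simp
    then show ?thesis unfolding F_def using ker cos_eq_iff[OF S] by blast
  qed
  show "mod_iso N (Qm S)" unfolding mod_iso_def
  proof (intro exI conjI ballI allI)
    show "bij_betw F (mcarrier N) (mcarrier (Qm S))"
      unfolding bij_betw_def inj_on_def carrier_Q car
      by (auto simp: Fc ker cos_eq_iff[OF S] image_image)
    show "F (madd N u v) = madd (Qm S) (F u) (F v)" if "u \<in> mcarrier N" "v \<in> mcarrier N" for u v
      using that by (auto simp: car add_Q[OF S] Fc simp flip: add)
    show "F (msmul N r u) = msmul (Qm S) r (F u)" if "u \<in> mcarrier N" for r u
      using that by (auto simp: car smul_Q[OF S] Fc simp flip: smul)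
  qed
qed

lemma iso_trans:
  assumes "mod_iso M N" "mod_iso N K" shows "mod_iso M K"
proof -
  obtain f where f: "bij_betw f (mcarrier M) (mcarrier N)"
    "\<forall>u\<in>mcarrier M. \<forall>v\<in>mcarrier M. f (madd M u v) = madd N (f u) (f v)"
    "\<forall>r. \<forall>u\<in>mcarrier M. f (msmul M r u) = msmul N r (f u)"
    using assms(1) unfolding mod_iso_def by blast
  obtain h where h: "bij_betw h (mcarrier N) (mcarrier K)"
    "\<forall>u\<in>mcarrier N. \<forall>v\<in>mcarrier N. h (madd N u v) = madd K (h u) (h v)"
    "\<forall>r. \<forall>u\<in>mcarrier N. h (msmul N r u) = msmul K r (h u)"
    using assms(2) unfolding mod_iso_def by blast
  have fin: "u \<in> mcarrier M \<Longrightarrow> f u \<in> mcarrier N" for u using f(1) bij_betwE by blast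
  show ?thesis unfolding mod_iso_def
    apply (rule exI[of _ "h \<circ> f"])
    using bij_betw_trans[OF f(1) h(1)] f(2,3) h(2,3) fin by auto
qed



abbreviation Gam :: "'a::comm_ring_1 \<Rightarrow> 'a \<Rightarrow> 'a \<Rightarrow> ('a \<times> 'a) set" where
  "Gam x y c \<equiv> range (gamma_map x y c)"

lemma mem_gamma: "p \<in> Gam x y c \<longleftrightarrow> (\<exists>s t. p = (x*s + c*t, y*t))"
  by (auto simp: gamma_map_def image_def)

lemma submod_gamma: "submod (Gam x y c)"
  unfolding submod_def
proof (intro conjI ballI allI)
  show "0 \<in> Gam x y c" unfolding mem_gamma
    by (rule exI[of _ 0], rule exI[of _ 0]) (simp add: zero_prod_def)
next
  fix p q assume "p \<in> Gam x y c" "q \<in> Gam x y c"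
  then obtain s t s' t' where "p = (x * s + c * t, y * t)" "q = (x * s' + c * t', y * t')"
    unfolding mem_gamma by blast
  then show "p + q \<in> Gam x y c" unfolding mem_gamma
    by (rule_tac x="s+s'" in exI, rule_tac x="t+t'" in exI) (simp add: algebra_simps)
next
  fix r p assume "p \<in> Gam x y c"
  then obtain s t where "p = (x * s + c * t, y * t)" unfolding mem_gamma by blast
  then show "sm r p \<in> Gam x y c" unfolding mem_gamma
    by (rule_tac x="r*s" in exI, rule_tac x="r*t" in exI) (simp add: algebra_simps)
qed

lemma lc: "X = Y \<Longrightarrow> Z = W \<Longrightarrow> c*(X - Y) + (Z - W) = (0::'a::comm_ring_1)" by simp

lemma diff0: "A - B = C \<Longrightarrow> C = 0 \<Longrightarrow> (A::'a::ab_group_add) = B"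
  by simp

locale xyctx =
  fixes x y :: "'a::comm_ring_1"
  assumes H1: "\<And>r. r*x = 0 \<longleftrightarrow> (\<exists>k. r = k*y)"
    and H2: "\<And>r. r*y = 0 \<longleftrightarrow> (\<exists>k. r = k*x)"
    and H3: "\<And>r k l. r = k*x \<Longrightarrow> r = l*y \<Longrightarrow> r = 0"
begin

lemma xy0: "x*y = 0"
proof -
  have "\<exists>k. x = k*x" by (rule exI[of _ 1]) simp
  then show ?thesis using H2[of x] by blast
qed

lemma K1_I:
  assumes "(v, 0) \<in> Gam x y a" "(0, b*v + x*u) \<in> Gam x y a"
  shows "(u, v) \<in> Gam y x (-b)"
proof -
  obtain \<sigma> \<tau> where st: "v = x*\<sigma> + a*\<tau>" "0 = y*\<tau>" using assms(1) by (auto simp: mem_gamma)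
  obtain k where k: "\<tau> = k*x" using H2[of \<tau>] st(2) by (auto simp: mult.commute)
  obtain \<sigma>' \<tau>' where st': "b*v + x*u = y*\<tau>'" using assms(2) by (auto simp: mem_gamma)
  have v: "v = x*(\<sigma> + a*k)" using st(1) k by (simp add: algebra_simps)
  have "b*v + x*u = (b*(\<sigma> + a*k) + u)*x" using v by (simp add: algebra_simps)
  moreover have "b*v + x*u = \<tau>'*y" using st' by (simp add: mult.commute)
  ultimately have "(b*(\<sigma> + a*k) + u)*x = 0" using H3 by metis
  then obtain l where l: "b*(\<sigma> + a*k) + u = l*y" using H1 by blast
  show ?thesis unfolding mem_gamma
    by (rule exI[of _ l], rule exI[of _ "\<sigma> + a*k"]) (use l v in \<open>auto simp: algebra_simps\<close>)
qed

lemma K2_I: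
  assumes "(u, v) \<in> Gam y x (-b)"
  shows "(v, 0) \<in> Gam x y a" "(0, b*v + x*u) \<in> Gam x y a"
proof -
  obtain s t where st: "u = y*s - b*t" "v = x*t" using assms by (auto simp: mem_gamma)
  show "(v, 0) \<in> Gam x y a" unfolding mem_gamma
    by (rule exI[of _ t], rule exI[of _ 0]) (simp add: st)
  have "b*v + x*u = b*(x*t) + x*(y*s - b*t)" by (simp add: st)
  also have "\<dots> = (x*y)*s" by (simp add: algebra_simps)
  finally have "b*v + x*u = 0" by (simp add: xy0)
  then show "(0, b*v + x*u) \<in> Gam x y a" unfolding mem_gamma
    by (rule_tac x=0 in exI, rule_tac x=0 in exI) (simp add: zero_prod_def)
qed

lemma C_I:
  assumes "s \<in> Gam x y (a*b)"
  shows "lin (v, 0) (0, b*v + x*u) s \<in> Gam x y a"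
proof -
  obtain \<sigma> \<tau> where s: "s = (x*\<sigma> + a*b*\<tau>, y*\<tau>)" using assms by (auto simp: mem_gamma)
  have e2: "y*\<tau>*(b*v + x*u) = y*(b*\<tau>*v)"
  proof -
    have "y*\<tau>*(b*v + x*u) = y*(b*\<tau>*v) + (x*y)*(\<tau>*u)" by (simp add: algebra_simps)
    then show ?thesis by (simp only: xy0 mult_zero_left add_0_right)
  qed
  have L: "lin (v,0) (0, b*v + x*u) s = ((x*\<sigma> + a*b*\<tau>)*v, y*\<tau>*(b*v + x*u))"
    by (simp add: lin_def s)
  show ?thesis unfolding mem_gamma L e2
    by (rule exI[of _ "\<sigma>*v"], rule exI[of _ "b*\<tau>*v"]) (simp add: algebra_simps)
qed

lemma S_I:
  assumes WR0: "\<forall>r m n. a*r = x*m + y*n \<longrightarrow> (\<exists>m' n'. r = x*m' + y*n')"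
    and c1: "sm x P \<in> Gam x y a" and c2: "sm (a*b) P + sm y R \<in> Gam x y a"
  shows "\<exists>u v. P - (v, 0) \<in> Gam x y a \<and> R - (0, b*v + x*u) \<in> Gam x y a"
proof -
  obtain p1 p2 where P: "P = (p1, p2)" by (cases P)
  obtain r1 r2 where R: "R = (r1, r2)" by (cases R)
  obtain \<tau>0 where "x*p2 = y*\<tau>0" using c1 by (auto simp: mem_gamma P)
  then have "p2*x = 0" using H3[of "p2*x" p2 \<tau>0] by (simp add: mult.commute)
  then obtain k where k: "p2 = k*y" using H1 by blast
  obtain \<sigma>' \<tau>' where e1: "a*b*p1 + y*r1 = x*\<sigma>' + a*\<tau>'" and e2: "a*b*p2 + y*r2 = y*\<tau>'"
    using c2 by (auto simp: mem_gamma P R)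
  have "(a*b*k + r2 - \<tau>')*y = (a*b*p2 + y*r2) - y*\<tau>'" by (simp add: k algebra_simps)
  then have "(a*b*k + r2 - \<tau>')*y = 0" by (simp add: e2)
  then obtain \<rho> where \<rho>: "a*b*k + r2 - \<tau>' = \<rho>*x" using H2 by blast
  have t: "\<tau>' = a*b*k + r2 - \<rho>*x" using \<rho> by (simp add: algebra_simps)
  have F: "a*(b*p1 - a*b*k - r2) = x*(\<sigma>' - a*\<rho>) + y*(-r1)"
    by (rule diff0[where C="a*(\<tau>' - (a*b*k + r2 - \<rho>*x)) + ((a*b*p1 + y*r1) - (x*\<sigma>' + a*\<tau>'))"])
       (simp add: algebra_simps, rule lc[OF t e1])
  then obtain m n where mn: "b*p1 - a*b*k - r2 = x*m + y*n" using WR0 by metis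
  have "(a*n + r1)*y = x*(\<sigma>' - a*\<rho> - a*m)"
    by (rule diff0[where C="a*((x*m + y*n) - (b*p1 - a*b*k - r2)) + (a*(b*p1 - a*b*k - r2) - (x*(\<sigma>' - a*\<rho>) + y*(-r1)))"])
       (simp add: algebra_simps, rule lc[OF mn[symmetric] F])
  then have "(a*n + r1)*y = 0" using H3[of "(a*n + r1)*y" "\<sigma>' - a*\<rho> - a*m" "a*n + r1"]
    by (simp add: mult.commute)
  then obtain w where w: "a*n + r1 = w*x" using H2 by blast
  show ?thesis
  proof (intro exI conjI)
    show "P - (p1 - a*k, 0) \<in> Gam x y a" unfolding mem_gamma
      by (rule exI[of _ 0], rule exI[of _ k]) (simp add: P k algebra_simps)
    show "R - (0, b*(p1 - a*k) + x*(-m)) \<in> Gam x y a" unfolding mem_gamma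
    proof (rule exI[of _ w], rule exI[of _ "-n"])
      have "r1 = x*w + a*(-n)"
        by (rule diff0[where C="(a*n + r1) - w*x"]) (simp add: algebra_simps, simp add: w)
      moreover have "r2 - (b*(p1 - a*k) + x*(-m)) = y*(-n)"
        by (rule diff0[where C="(x*m + y*n) - (b*p1 - a*b*k - r2)"]) (simp add: algebra_simps, simp add: mn)
      ultimately show "R - (0, b*(p1 - a*k) + x*(-m)) = (x*w + a*(-n), y*(-n))" by (simp add: R)
    qed
  qed
qed

lemma C_II:
  assumes "s \<in> Gam x y a"
  shows "lin (b*v - y*u, 0) (a*u, v) s \<in> Gam x y (a*b)"
proof -
  obtain \<sigma> \<tau> where s: "s = (x*\<sigma> + a*\<tau>, y*\<tau>)" using assms by (auto simp: mem_gamma)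
  have e1: "(x*\<sigma> + a*\<tau>)*(b*v - y*u) + y*\<tau>*(a*u) = x*(\<sigma>*b*v) + a*b*(\<tau>*v)"
  proof -
    have "(x*\<sigma> + a*\<tau>)*(b*v - y*u) + y*\<tau>*(a*u) = x*(\<sigma>*b*v) + a*b*(\<tau>*v) - (x*y)*(\<sigma>*u)"
      by (simp add: algebra_simps)
    then show ?thesis by (simp only: xy0 mult_zero_left diff_0_right)
  qed
  have L: "lin (b*v - y*u, 0) (a*u, v) s = ((x*\<sigma> + a*\<tau>)*(b*v - y*u) + y*\<tau>*(a*u), y*\<tau>*v)"
    by (simp add: lin_def s)
  show ?thesis unfolding mem_gamma L e1
    by (rule exI[of _ "\<sigma>*b*v"], rule exI[of _ "\<tau>*v"]) (simp add: algebra_simps)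
qed

lemma K1_II:
  assumes "(b*v - y*u, 0) \<in> Gam x y (a*b)" "(a*u, v) \<in> Gam x y (a*b)"
  shows "(u, v) \<in> Gam x y b"
proof -
  obtain \<sigma> \<tau> where st: "b*v - y*u = x*\<sigma> + a*b*\<tau>" "0 = y*\<tau>" using assms(1) by (auto simp: mem_gamma)
  obtain k where k: "\<tau> = k*x" using H2[of \<tau>] st(2) by (auto simp: mult.commute)
  obtain \<tau>' where v: "v = y*\<tau>'" using assms(2) by (auto simp: mem_gamma)
  have "(b*\<tau>' - u)*y = b*v - y*u" by (simp add: v algebra_simps)
  also have "\<dots> = x*\<sigma> + a*b*\<tau>" by (rule st(1))
  also have "\<dots> = (\<sigma> + a*b*k)*x" by (simp add: k algebra_simps)
  finally have "(b*\<tau>' - u)*y = 0" using H3 by metis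
  then obtain l where l: "b*\<tau>' - u = l*x" using H2 by blast
  show ?thesis unfolding mem_gamma
  proof (rule exI[of _ "-l"], rule exI[of _ "\<tau>'"])
    have "u = x*(-l) + b*\<tau>'"
      by (rule diff0[where C="l*x - (b*\<tau>' - u)"]) (simp add: algebra_simps, simp add: l)
    then show "(u, v) = (x*(-l) + b*\<tau>', y*\<tau>')" by (simp add: v)
  qed
qed

lemma K2_II:
  assumes "(u, v) \<in> Gam x y b"
  shows "(b*v - y*u, 0) \<in> Gam x y (a*b)" "(a*u, v) \<in> Gam x y (a*b)"
proof -
  obtain s t where st: "u = x*s + b*t" "v = y*t" using assms by (auto simp: mem_gamma)
  have "b*v - y*u = -((x*y)*s)" by (simp add: st algebra_simps)
  then have "b*v - y*u = 0" by (simp add: xy0)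
  then show "(b*v - y*u, 0) \<in> Gam x y (a*b)" unfolding mem_gamma
    by (rule_tac x=0 in exI, rule_tac x=0 in exI) simp
  show "(a*u, v) \<in> Gam x y (a*b)" unfolding mem_gamma
    by (rule exI[of _ "a*s"], rule exI[of _ t]) (simp add: st algebra_simps)
qed

lemma S_II:
  assumes WR0: "\<forall>r m n. a*r = x*m + y*n \<longrightarrow> (\<exists>m' n'. r = x*m' + y*n')"
    and c1: "sm x P \<in> Gam x y (a*b)" and c2: "sm a P + sm y R \<in> Gam x y (a*b)"
  shows "\<exists>u v. P - (b*v - y*u, 0) \<in> Gam x y (a*b) \<and> R - (a*u, v) \<in> Gam x y (a*b)"
proof -
  obtain p1 p2 where P: "P = (p1, p2)" by (cases P)
  obtain r1 r2 where R: "R = (r1, r2)" by (cases R)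
  obtain \<tau>0 where "x*p2 = y*\<tau>0" using c1 by (auto simp: mem_gamma P)
  then have "p2*x = 0" using H3[of "p2*x" p2 \<tau>0] by (simp add: mult.commute)
  then obtain k where k: "p2 = k*y" using H1 by blast
  obtain \<sigma>' \<tau>' where e1: "a*p1 + y*r1 = x*\<sigma>' + a*b*\<tau>'" and e2: "a*p2 + y*r2 = y*\<tau>'"
    using c2 by (auto simp: mem_gamma P R)
  have "(a*k + r2 - \<tau>')*y = (a*p2 + y*r2) - y*\<tau>'" by (simp add: k algebra_simps)
  then have "(a*k + r2 - \<tau>')*y = 0" by (simp add: e2)
  then obtain \<rho> where \<rho>: "a*k + r2 - \<tau>' = \<rho>*x" using H2 by blast
  have t: "\<tau>' = a*k + r2 - \<rho>*x" using \<rho> by (simp add: algebra_simps)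
  have F: "a*(p1 - a*b*k - b*r2) = x*(\<sigma>' - a*b*\<rho>) + y*(-r1)"
    by (rule diff0[where C="(a*b)*(\<tau>' - (a*k + r2 - \<rho>*x)) + ((a*p1 + y*r1) - (x*\<sigma>' + a*b*\<tau>'))"])
       (simp add: algebra_simps, rule lc[OF t e1])
  then obtain m n where mn: "p1 - a*b*k - b*r2 = x*m + y*n" using WR0 by metis
  have "(a*n + r1)*y = x*(\<sigma>' - a*b*\<rho> - a*m)"
    by (rule diff0[where C="a*((x*m + y*n) - (p1 - a*b*k - b*r2)) + (a*(p1 - a*b*k - b*r2) - (x*(\<sigma>' - a*b*\<rho>) + y*(-r1)))"])
       (simp add: algebra_simps, rule lc[OF mn[symmetric] F])
  then have "(a*n + r1)*y = 0" using H3[of "(a*n + r1)*y" "\<sigma>' - a*b*\<rho> - a*m" "a*n + r1"]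
    by (simp add: mult.commute)
  then obtain w where w: "a*n + r1 = w*x" using H2 by blast
  show ?thesis
  proof (intro exI conjI)
    show "P - (b*r2 - y*(-n), 0) \<in> Gam x y (a*b)" unfolding mem_gamma
    proof (rule exI[of _ m], rule exI[of _ k])
      have "p1 - (b*r2 - y*(-n)) = x*m + a*b*k"
        by (rule diff0[where C="(p1 - a*b*k - b*r2) - (x*m + y*n)"]) (simp add: algebra_simps, simp add: mn)
      then show "P - (b*r2 - y*(-n), 0) = (x*m + a*b*k, y*k)" by (simp add: P k mult.commute)
    qed
    show "R - (a*(-n), r2) \<in> Gam x y (a*b)" unfolding mem_gamma
    proof (rule exI[of _ w], rule exI[of _ 0])
      have "r1 - a*(-n) = x*w"
        by (rule diff0[where C="(a*n + r1) - w*x"]) (simp add: algebra_simps, simp add: w)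
      then show "R - (a*(-n), r2) = (x*w + a*b*0, y*0)" by (simp add: R)
    qed
  qed
qed

lemma core_I:
  assumes WR: "\<And>r m n. a*r = x*m + y*n \<Longrightarrow> \<exists>m' n'. r = x*m' + y*n'"
  shows "mod_iso (Qm (Gam y x (-b))) (Hom_mod (Qm (Gam x y (a*b))) (Qm (Gam x y a)))
       \<and> mod_iso (Hom_mod (Qm (Gam x y (a*b))) (Qm (Gam x y a))) (Qm (Gam y x (-b)))"
proof -
  have WR0: "\<forall>r m n. a*r = x*m + y*n \<longrightarrow> (\<exists>m' n'. r = x*m' + y*n')" 
  proof (intro allI impI)
    fix r m n assume "a*r = x*m + y*n"
    then show "\<exists>m' n'. r = x*m' + y*n'" by (rule WR)
  qed
  define S1 where "S1 = Gam x y (a*b)"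
  define S2 where "S2 = Gam x y a"
  define PI where "PI w = (snd w, 0::'a)" for w :: "'a \<times> 'a"
  define RI where "RI w = (0::'a, b*snd w + x*fst w)" for w :: "'a \<times> 'a"
  define g where "g w = ind S1 S2 (lin (PI w) (RI w))" for w
  have s1: "submod S1" and s2: "submod S2" unfolding S1_def S2_def by (rule submod_gamma)+
  have cond: "\<forall>s\<in>S1. lin (PI w) (RI w) s \<in> S2" for w
    unfolding S1_def S2_def PI_def RI_def using C_I by blast
  have PIa: "PI (w + w') = PI w + PI w'" "RI (w + w') = RI w + RI w'" for w w'
    by (simp_all add: PI_def RI_def algebra_simps)
  have PIs: "PI (sm r w) = sm r (PI w)" "RI (sm r w) = sm r (RI w)" for r w
    by (simp_all add: PI_def RI_def algebra_simps)
  have PId: "PI (w - w') = PI w - PI w'" "RI (w - w') = RI w - RI w'" for w w'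
    by (simp_all add: PI_def RI_def algebra_simps)
  have "mod_iso (Qm (Gam y x (-b))) (Hom_mod (Qm S1) (Qm S2)) \<and> mod_iso (Hom_mod (Qm S1) (Qm S2)) (Qm (Gam y x (-b)))"
  proof (rule first_iso[OF submod_gamma])
    show "g (w + w') = madd (Hom_mod (Qm S1) (Qm S2)) (g w) (g w')" for w w'
      unfolding g_def Hom_add[OF s2] PIa ..
    show "g (sm r w) = msmul (Hom_mod (Qm S1) (Qm S2)) r (g w)" for r w
      unfolding g_def Hom_smul[OF s2] PIs ..
    show "mcarrier (Hom_mod (Qm S1) (Qm S2)) = range g"
    proof
      show "range g \<subseteq> mcarrier (Hom_mod (Qm S1) (Qm S2))"
        unfolding g_def using ind_in_Hom[OF s1 s2 cond] by blast
    next
      show "mcarrier (Hom_mod (Qm S1) (Qm S2)) \<subseteq> range g"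
      proof
        fix \<phi> assume "\<phi> \<in> mcarrier (Hom_mod (Qm S1) (Qm S2))"
        then obtain P R where \<phi>: "\<phi> = ind S1 S2 (lin P R)" and c: "\<forall>s\<in>S1. lin P R s \<in> S2"
          using Hom_char[OF s1 s2] by blast
        have "(x, 0) \<in> S1" unfolding S1_def mem_gamma by (rule exI[of _ 1], rule exI[of _ 0]) simp
        then have "lin P R (x, 0) \<in> S2" using c by blast
        moreover have "lin P R (x, 0) = sm x P" by (simp add: lin_def prod_eq_iff)
        ultimately have c1: "sm x P \<in> Gam x y a" by (simp add: S2_def)
        have "(a*b, y) \<in> S1" unfolding S1_def mem_gamma by (rule exI[of _ 0], rule exI[of _ 1]) simp
        then have "lin P R (a*b, y) \<in> S2" using c by blast
        then have c2: "sm (a*b) P + sm y R \<in> Gam x y a" by (simp add: lin_def S2_def)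
        obtain u v where uv: "P - (v, 0) \<in> Gam x y a" "R - (0, b*v + x*u) \<in> Gam x y a"
          using S_I[where a=a and b=b and P=P and R=R, OF WR0 c1 c2] by blast
        have "\<phi> = g (u, v)" unfolding \<phi> g_def PI_def RI_def
          by (rule ind_eq_if[OF s2]) (use uv in \<open>simp_all add: S2_def\<close>)
        then show "\<phi> \<in> range g" by blast
      qed
    qed
    show "g w = g w' \<longleftrightarrow> w - w' \<in> Gam y x (-b)" for w w'
    proof
      assume "g w = g w'"
      then have "PI w - PI w' \<in> S2 \<and> RI w - RI w' \<in> S2"
        unfolding g_def by (rule ind_eq_imp[OF s1 s2 cond cond])
      then have "PI (w - w') \<in> S2" "RI (w - w') \<in> S2" by (simp_all add: PId)
      then have "(fst (w - w'), snd (w - w')) \<in> Gam y x (-b)"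
        unfolding PI_def RI_def S2_def by (rule K1_I)
      then show "w - w' \<in> Gam y x (-b)" by (simp only: prod.collapse)
    next
      assume h: "w - w' \<in> Gam y x (-b)"
      have h': "(fst (w - w'), snd (w - w')) \<in> Gam y x (-b)" using h by (simp only: prod.collapse)
      have "PI (w - w') \<in> S2" "RI (w - w') \<in> S2"
        unfolding PI_def RI_def S2_def by (rule K2_I[OF h'])+
      then show "g w = g w'" unfolding g_def
        by (intro ind_eq_if[OF s2]) (simp_all add: PId)
    qed
  qed
  then show ?thesis unfolding S1_def S2_def .
qed

lemma core_II:
  assumes WR: "\<And>r m n. a*r = x*m + y*n \<Longrightarrow> \<exists>m' n'. r = x*m' + y*n'"
  shows "mod_iso (Qm (Gam x y b)) (Hom_mod (Qm (Gam x y a)) (Qm (Gam x y (a*b))))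
       \<and> mod_iso (Hom_mod (Qm (Gam x y a)) (Qm (Gam x y (a*b)))) (Qm (Gam x y b))"
proof -
  have WR0: "\<forall>r m n. a*r = x*m + y*n \<longrightarrow> (\<exists>m' n'. r = x*m' + y*n')" 
  proof (intro allI impI)
    fix r m n assume "a*r = x*m + y*n"
    then show "\<exists>m' n'. r = x*m' + y*n'" by (rule WR)
  qed
  define S1 where "S1 = Gam x y a"
  define S2 where "S2 = Gam x y (a*b)"
  define PI where "PI w = (b*snd w - y*fst w, 0::'a)" for w :: "'a \<times> 'a"
  define RI where "RI w = (a*fst w, snd w)" for w :: "'a \<times> 'a"
  define g where "g w = ind S1 S2 (lin (PI w) (RI w))" for w
  have s1: "submod S1" and s2: "submod S2" unfolding S1_def S2_def by (rule submod_gamma)+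
  have cond: "\<forall>s\<in>S1. lin (PI w) (RI w) s \<in> S2" for w
    unfolding S1_def S2_def PI_def RI_def using C_II by blast
  have PIa: "PI (w + w') = PI w + PI w'" "RI (w + w') = RI w + RI w'" for w w'
    by (simp_all add: PI_def RI_def algebra_simps)
  have PIs: "PI (sm r w) = sm r (PI w)" "RI (sm r w) = sm r (RI w)" for r w
    by (simp_all add: PI_def RI_def algebra_simps)
  have PId: "PI (w - w') = PI w - PI w'" "RI (w - w') = RI w - RI w'" for w w'
    by (simp_all add: PI_def RI_def algebra_simps)
  have "mod_iso (Qm (Gam x y b)) (Hom_mod (Qm S1) (Qm S2)) \<and> mod_iso (Hom_mod (Qm S1) (Qm S2)) (Qm (Gam x y b))"
  proof (rule first_iso[OF submod_gamma])
    show "g (w + w') = madd (Hom_mod (Qm S1) (Qm S2)) (g w) (g w')" for w w'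
      unfolding g_def Hom_add[OF s2] PIa ..
    show "g (sm r w) = msmul (Hom_mod (Qm S1) (Qm S2)) r (g w)" for r w
      unfolding g_def Hom_smul[OF s2] PIs ..
    show "mcarrier (Hom_mod (Qm S1) (Qm S2)) = range g"
    proof
      show "range g \<subseteq> mcarrier (Hom_mod (Qm S1) (Qm S2))"
        unfolding g_def using ind_in_Hom[OF s1 s2 cond] by blast
    next
      show "mcarrier (Hom_mod (Qm S1) (Qm S2)) \<subseteq> range g"
      proof
        fix \<phi> assume "\<phi> \<in> mcarrier (Hom_mod (Qm S1) (Qm S2))"
        then obtain P R where \<phi>: "\<phi> = ind S1 S2 (lin P R)" and c: "\<forall>s\<in>S1. lin P R s \<in> S2"
          using Hom_char[OF s1 s2] by blast
        have "(x, 0) \<in> S1" unfolding S1_def mem_gamma by (rule exI[of _ 1], rule exI[of _ 0]) simp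
        then have "lin P R (x, 0) \<in> S2" using c by blast
        moreover have "lin P R (x, 0) = sm x P" by (simp add: lin_def prod_eq_iff)
        ultimately have c1: "sm x P \<in> Gam x y (a*b)" by (simp add: S2_def)
        have "(a, y) \<in> S1" unfolding S1_def mem_gamma by (rule exI[of _ 0], rule exI[of _ 1]) simp
        then have "lin P R (a, y) \<in> S2" using c by blast
        then have c2: "sm a P + sm y R \<in> Gam x y (a*b)" by (simp add: lin_def S2_def)
        obtain u v where uv: "P - (b*v - y*u, 0) \<in> Gam x y (a*b)" "R - (a*u, v) \<in> Gam x y (a*b)"
          using S_II[where a=a and b=b and P=P and R=R, OF WR0 c1 c2] by blast
        have "\<phi> = g (u, v)" unfolding \<phi> g_def PI_def RI_def
          by (rule ind_eq_if[OF s2]) (use uv in \<open>simp_all add: S2_def\<close>)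
        then show "\<phi> \<in> range g" by blast
      qed
    qed
    show "g w = g w' \<longleftrightarrow> w - w' \<in> Gam x y b" for w w'
    proof
      assume "g w = g w'"
      then have "PI w - PI w' \<in> S2 \<and> RI w - RI w' \<in> S2"
        unfolding g_def by (rule ind_eq_imp[OF s1 s2 cond cond])
      then have "PI (w - w') \<in> S2" "RI (w - w') \<in> S2" by (simp_all add: PId)
      then have "(fst (w - w'), snd (w - w')) \<in> Gam x y b"
        unfolding PI_def RI_def S2_def by (rule K1_II[where a=a])
      then show "w - w' \<in> Gam x y b" by (simp only: prod.collapse)
    next
      assume h: "w - w' \<in> Gam x y b"
      have h': "(fst (w - w'), snd (w - w')) \<in> Gam x y b" using h by (simp only: prod.collapse)
      have "PI (w - w') \<in> S2" "RI (w - w') \<in> S2"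
        unfolding PI_def RI_def S2_def by (rule K2_II[OF h'])+
      then show "g w = g w'" unfolding g_def
        by (intro ind_eq_if[OF s2]) (simp_all add: PId)
    qed
  qed
  then show ?thesis unfolding S1_def S2_def .
qed

end



lemma sign_iso: "mod_iso (Qm (Gam x y c)) (Qm (Gam x y (-c))) \<and> mod_iso (Qm (Gam x y (-c))) (Qm (Gam x y c))"
proof -
  define T where "T = Gam x y (-c)"
  define ng where "ng w = (fst w, - snd w)" for w :: "'a \<times> 'a"
  define g where "g w = cos T (ng w)" for w
  have sT: "submod T" unfolding T_def by (rule submod_gamma)
  have memT: "ng p \<in> T \<longleftrightarrow> p \<in> Gam x y c" for p
  proof
    assume "ng p \<in> T"
    then obtain s t where "ng p = (x*s + (-c)*t, y*t)" unfolding T_def mem_gamma by blast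
    then have "p = (x*s + c*(-t), y*(-t))" unfolding ng_def by (cases p) (auto, metis minus_minus)
    then show "p \<in> Gam x y c" unfolding mem_gamma by blast
  next
    assume "p \<in> Gam x y c"
    then obtain s t where "p = (x*s + c*t, y*t)" unfolding mem_gamma by blast
    then have "ng p = (x*s + (-c)*(-t), y*(-t))" unfolding ng_def by simp
    then show "ng p \<in> T" unfolding T_def mem_gamma by blast
  qed
  have "mod_iso (Qm (Gam x y c)) (Qm T) \<and> mod_iso (Qm T) (Qm (Gam x y c))"
  proof (rule first_iso[OF submod_gamma])
    show "g (w + w') = madd (Qm T) (g w) (g w')" for w w'
      unfolding g_def add_Q[OF sT] by (simp add: ng_def)
    show "g (sm r w) = msmul (Qm T) r (g w)" for r w
      unfolding g_def smul_Q[OF sT] by (simp add: ng_def)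
    show "mcarrier (Qm T) = range g"
    proof -
      have "cos T v = g (ng v)" for v by (simp add: g_def ng_def)
      then show ?thesis unfolding carrier_Q g_def by auto
    qed
    show "g w = g w' \<longleftrightarrow> w - w' \<in> Gam x y c" for w w'
    proof -
      have "ng w - ng w' = ng (w - w')" by (simp add: ng_def)
      then show ?thesis unfolding g_def cos_eq_iff[OF sT] using memT by simp
    qed
  qed
  then show ?thesis unfolding T_def .
qed

lemma eta_gamma: "eta_map x y c = gamma_map y x (-c)"
  by (simp add: eta_map_def gamma_map_def)

lemma H_eq: "H_mod x y c = Qm (Gam y x (-c))"
  by (simp add: H_mod_def eta_gamma)

lemma G_eq: "G_mod x y c = Qm (Gam x y c)"
  by (simp add: G_mod_def)

lemma ideal_span_xy: "ideal_span {x, y} = {z. \<exists>m n. z = x*m + y*n}"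
proof (rule set_eqI, rule iffI)
  fix z assume "z \<in> ideal_span {x, y}"
  then obtain c where z: "z = (\<Sum>f\<in>{x, y}. c f * f)" unfolding ideal_span_def by blast
  show "z \<in> {z. \<exists>m n. z = x*m + y*n}"
  proof (cases "x = y")
    case True
    then have "z = x * c x + y * 0" using z by (simp add: mult.commute)
    then show ?thesis by blast
  next
    case False
    then have "z = x * c x + y * c y" using z by (simp add: mult.commute)
    then show ?thesis by blast
  qed
next
  fix z assume "z \<in> {z. \<exists>m n. z = x*m + y*n}"
  then obtain m n where z: "z = x*m + y*n" by blast
  show "z \<in> ideal_span {x, y}"
  proof (cases "x = y")
    case True
    then have "z = (\<Sum>f\<in>{x, y}. (m + n) * f)" using z by (simp add: algebra_simps)
    then show ?thesis unfolding ideal_span_def mem_Collect_eq by (intro exI[of _ "\<lambda>_. m + n"]) simp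
  next
    case False
    then have "z = (\<Sum>f\<in>{x, y}. (if f = x then m else n) * f)" using z by (simp add: algebra_simps)
    then show ?thesis unfolding ideal_span_def mem_Collect_eq by (intro exI[of _ "\<lambda>f. if f = x then m else n"]) simp
  qed
qed

lemma WR_from:
  fixes x y a :: "'a::comm_ring_1"
  assumes wr: "weakly_regular a (quot_xy x y)" and e: "a*r = x*m + y*n"
  shows "\<exists>m' n'. r = x*m' + y*n'"
proof -
  define I where "I = {z. \<exists>m n. z = x*m + y*n}"
  have Ieq: "ideal_span {x, y} = I" unfolding I_def by (rule ideal_span_xy)
  have I0: "0 \<in> I" unfolding I_def by (rule CollectI, rule exI[of _ 0], rule exI[of _ 0]) simp
  have Iadd: "u \<in> I \<Longrightarrow> w \<in> I \<Longrightarrow> u + w \<in> I" for u w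
  proof -
    assume "u \<in> I" "w \<in> I"
    then obtain m1 n1 m2 n2 where "u = x*m1 + y*n1" "w = x*m2 + y*n2" unfolding I_def by blast
    then have "u + w = x*(m1+m2) + y*(n1+n2)" by (simp add: algebra_simps)
    then show ?thesis unfolding I_def by blast
  qed
  have Imul: "u \<in> I \<Longrightarrow> t*u \<in> I" for u t
  proof -
    assume "u \<in> I"
    then obtain m1 n1 where "u = x*m1 + y*n1" unfolding I_def by blast
    then have "t*u = x*(t*m1) + y*(t*n1)" by (simp add: algebra_simps)
    then show ?thesis unfolding I_def by blast
  qed
  have Ineg: "u \<in> I \<Longrightarrow> -u \<in> I" for u using Imul[of u "-1"] by simp
  define C where "C v = {v + s |s. s \<in> I}" for v
  have memC: "z \<in> C v \<longleftrightarrow> z - v \<in> I" for z v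
  proof
    assume "z \<in> C v" then show "z - v \<in> I" unfolding C_def by auto
  next
    assume "z - v \<in> I" then have "z = v + (z - v) \<and> z - v \<in> I" by simp
    then show "z \<in> C v" unfolding C_def by blast
  qed
  have Q: "quot_xy x y = quot_mod ring_mod I" unfolding quot_xy_def Ieq ..
  have car: "C v \<in> mcarrier (quot_xy x y)" for v
    unfolding Q quot_mod_def C_def by (auto simp: ring_mod_def)
  have sm: "msmul (quot_xy x y) a (C v) = C (a*v)" for v
  proof -
    have "msmul (quot_xy x y) a (C v) = {a*c + s |c s. c \<in> C v \<and> s \<in> I}"
      unfolding Q by (simp add: quot_mod_def ring_mod_def)
    also have "\<dots> = C (a*v)"
    proof (rule set_eqI, rule iffI)
      fix z assume "z \<in> {a*c + s |c s. c \<in> C v \<and> s \<in> I}"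
      then obtain c s where z: "z = a*c + s" "c - v \<in> I" "s \<in> I" by (auto simp: memC)
      have "a*(c - v) + s \<in> I" using z Imul Iadd by blast
      moreover have "a*(c - v) + s = z - a*v" using z by (simp add: algebra_simps)
      ultimately show "z \<in> C (a*v)" by (simp add: memC)
    next
      fix z assume "z \<in> C (a*v)"
      then have "z = a*v + (z - a*v) \<and> v \<in> C v \<and> z - a*v \<in> I" by (simp add: memC I0)
      then show "z \<in> {a*c + s |c s. c \<in> C v \<and> s \<in> I}" by blast
    qed
    finally show ?thesis .
  qed
  have "a*r \<in> I" using e unfolding I_def by blast
  have CC: "C (a*r) = C (a*0)"
  proof (rule set_eqI)
    fix z
    have "z - a*r \<in> I \<longleftrightarrow> z - a*0 \<in> I"
    proof
      assume "z - a*r \<in> I" then have "(z - a*r) + a*r \<in> I" using \<open>a*r \<in> I\<close> Iadd by blast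
      then show "z - a*0 \<in> I" by simp
    next
      assume "z - a*0 \<in> I" then have "(z - a*0) + - (a*r) \<in> I" using \<open>a*r \<in> I\<close> Iadd Ineg by blast
      then show "z - a*r \<in> I" by simp
    qed
    then show "z \<in> C (a*r) \<longleftrightarrow> z \<in> C (a*0)" by (simp add: memC)
  qed
  have "msmul (quot_xy x y) a (C r) = msmul (quot_xy x y) a (C 0)"
    by (simp only: sm CC)
  then have "C r = C 0"
    by (rule inj_onD[OF wr[unfolded weakly_regular_def] _ car car])
  moreover have "r \<in> C r" by (simp add: memC I0)
  ultimately have "r \<in> I" by (simp add: memC)
  then show ?thesis unfolding I_def by blast
qed

theorem theorem7p7:
  fixes x y a b :: "'a::comm_ring_1"
  assumes "noetherian_ring TYPE('a)"
    and "local_ring TYPE('a)"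
    and "regular_exact_pair x y"
    and "weakly_regular a (quot_xy x y)"
  shows "mod_iso (Hom_mod (H_mod x y a) (H_mod x y (a * b))) (Hom_mod (G_mod x y (a * b)) (G_mod x y a))
       \<and> mod_iso (Hom_mod (G_mod x y (a * b)) (G_mod x y a)) (H_mod x y b)
       \<and> mod_iso (Hom_mod (G_mod x y a) (G_mod x y (a * b))) (Hom_mod (H_mod x y (a * b)) (H_mod x y a))
       \<and> mod_iso (Hom_mod (H_mod x y (a * b)) (H_mod x y a)) (G_mod x y b)"
proof -
  have r: "exact_pair x y \<and> principal x \<inter> principal y = {0}"
    using assms(3) unfolding regular_exact_pair_def .
  have e: "\<not> is_unit x \<and> \<not> is_unit y \<and> Ann x = principal y \<and> Ann y = principal x"
    using conjunct1[OF r] unfolding exact_pair_def .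
  have ep1: "Ann x = principal y" and ep2: "Ann y = principal x" using e by auto
  have ep3: "principal x \<inter> principal y = {0}" using r by (rule conjunct2)
  have H1: "r*x = 0 \<longleftrightarrow> (\<exists>k. r = k*y)" for r
  proof -
    have "r \<in> Ann x \<longleftrightarrow> r \<in> principal y" by (simp only: ep1)
    then show ?thesis by (simp add: Ann_def principal_def)
  qed
  have H2: "r*y = 0 \<longleftrightarrow> (\<exists>k. r = k*x)" for r
  proof -
    have "r \<in> Ann y \<longleftrightarrow> r \<in> principal x" by (simp only: ep2)
    then show ?thesis by (simp add: Ann_def principal_def)
  qed
  have H3: "r = 0" if "r = k*x" "r = l*y" for r k l
  proof -
    have "r \<in> principal x \<inter> principal y" using that unfolding principal_def by blast
    then show ?thesis by (simp only: ep3) simp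
  qed
  interpret c1: xyctx x y by unfold_locales (fact H1 H2 H3)+
  interpret c2: xyctx y x by unfold_locales (fact H2, fact H1, rule H3, assumption+)
  have WR: "\<exists>m' n'. r = x*m' + y*n'" if "a*r = x*m + y*n" for r m n
    using WR_from[OF assms(4) that] .
  have WR': "\<exists>m' n'. r = y*m' + x*n'" if "(-a)*r = y*m + x*n" for r m n
  proof -
    have "a*r = -((-a)*r)" by simp
    also have "\<dots> = -(y*m + x*n)" by (simp only: that)
    also have "\<dots> = x*(-n) + y*(-m)" by (simp add: algebra_simps)
    finally have "a*r = x*(-n) + y*(-m)" .
    then obtain m' n' where "r = x*m' + y*n'" using WR by blast
    then have "r = y*n' + x*m'" by (simp add: algebra_simps)
    then show ?thesis by blast
  qed
  have ab: "-(a*b) = (-a)*b" by simp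
  note I1 = c1.core_I[of a b, OF WR]
  note II1 = c1.core_II[of a b, OF WR]
  note I2 = c2.core_I[of "-a" b, OF WR']
  note II2 = c2.core_II[of "-a" b, OF WR']
  have HG: "H_mod x y (a*b) = Qm (Gam y x ((-a)*b))" "H_mod x y a = Qm (Gam y x (-a))"
     "H_mod x y b = Qm (Gam y x (-b))"
    by (simp_all only: H_eq ab)
  have s1: "mod_iso (Qm (Gam x y b)) (Qm (Gam x y (-b)))" using sign_iso by blast
  have s2: "mod_iso (Qm (Gam y x b)) (Qm (Gam y x (-b)))" using sign_iso by blast
  have s3: "mod_iso (Qm (Gam x y (-b))) (Qm (Gam x y b))" using sign_iso by blast
  have p1: "mod_iso (Hom_mod (H_mod x y a) (H_mod x y (a * b))) (Hom_mod (G_mod x y (a * b)) (G_mod x y a))"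
    unfolding HG G_eq using iso_trans[OF iso_trans[OF conjunct2[OF II2] s2] conjunct1[OF I1]] by simp
  have p2: "mod_iso (Hom_mod (G_mod x y (a * b)) (G_mod x y a)) (H_mod x y b)"
    unfolding HG G_eq using conjunct2[OF I1] by simp
  have p3: "mod_iso (Hom_mod (G_mod x y a) (G_mod x y (a * b))) (Hom_mod (H_mod x y (a * b)) (H_mod x y a))"
    unfolding HG G_eq using iso_trans[OF iso_trans[OF conjunct2[OF II1] s1] conjunct1[OF I2]] by simp
  have p4: "mod_iso (Hom_mod (H_mod x y (a * b)) (H_mod x y a)) (G_mod x y b)"
    unfolding HG G_eq using iso_trans[OF conjunct2[OF I2] s3] by simp
  show ?thesis using p1 p2 p3 p4 by blast
qed

end
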